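(* Let $n\ge1$ and let $J\subset S$ be a homogeneous ideal. Suppose that for some $m>0$, $J_m$ is nonzero and spanned by an initial segment of degree-$m$ monomials with respect to the degree reverse lexicographic order. If $J_{m'}\neq0$ for some $m'<m$ (i.e. $J$ is not generated in degrees $\ge m$), then the Hilbert polynomial of $S/J$ is constant.
   Context: $S=k[x_0,\dots,x_n]=\bigoplus_m S_m$ over an algebraically closed field $k$ of characteristic zero. The degree reverse lexicographic order with $x_0\succ\cdots\succ x_n$: for monomials of the same degree, $x^\alpha\succ x^\beta$ iff the last nonzero entry of $\alpha-\beta$ is negative. An initial segment of degree $t$ is the set of the first $\ell$ monomials of degree $t$ in this order, for some $\ell$. *)

theory Defs
  imports Main "HOL-Library.Poly_Mapping" "HOL-Computational_Algebra.Polynomial"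
begin

text \<open>Polynomials in the variables x_0, x_1, ... over a field 'k: finitely supported maps
  from exponent vectors (finitely supported nat => nat) to coefficients.
  The ring S = k[x_0,...,x_n] is the set of those polynomials involving only x_0..x_n.\<close>

type_synonym 'k mpoly = "(nat \<Rightarrow>\<^sub>0 nat) \<Rightarrow>\<^sub>0 'k"

definition mdeg :: "(nat \<Rightarrow>\<^sub>0 nat) \<Rightarrow> nat" where
  "mdeg \<alpha> = (\<Sum>i\<in>Poly_Mapping.keys \<alpha>. Poly_Mapping.lookup \<alpha> i)"

definition Mon :: "nat \<Rightarrow> nat \<Rightarrow> (nat \<Rightarrow>\<^sub>0 nat) set" where
  "Mon n t = {\<alpha>. Poly_Mapping.keys \<alpha> \<subseteq> {..n} \<and> mdeg \<alpha> = t}"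

definition polyring :: "nat \<Rightarrow> 'k::field mpoly set" where
  "polyring n = {f. \<forall>\<alpha>\<in>Poly_Mapping.keys f. Poly_Mapping.keys \<alpha> \<subseteq> {..n}}"

definition graded_piece :: "nat \<Rightarrow> nat \<Rightarrow> 'k::field mpoly set" where
  "graded_piece n t = {f \<in> polyring n. \<forall>\<alpha>\<in>Poly_Mapping.keys f. mdeg \<alpha> = t}"

definition hcomp :: "nat \<Rightarrow> 'k::field mpoly \<Rightarrow> 'k mpoly" where
  "hcomp t f = Abs_poly_mapping (\<lambda>\<alpha>. if mdeg \<alpha> = t then Poly_Mapping.lookup f \<alpha> else 0)"

definition mscale :: "'k::field \<Rightarrow> 'k mpoly \<Rightarrow> 'k mpoly" where
  "mscale c f = Poly_Mapping.single 0 c * f"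

definition monom_poly :: "(nat \<Rightarrow>\<^sub>0 nat) \<Rightarrow> 'k::field mpoly" where
  "monom_poly \<alpha> = Poly_Mapping.single \<alpha> 1"

definition is_ideal :: "nat \<Rightarrow> 'k::field mpoly set \<Rightarrow> bool" where
  "is_ideal n J \<longleftrightarrow> J \<subseteq> polyring n \<and> 0 \<in> J \<and>
     (\<forall>f\<in>J. \<forall>g\<in>J. f + g \<in> J) \<and> (\<forall>f\<in>J. \<forall>g\<in>polyring n. g * f \<in> J)"

definition homogeneous_ideal :: "nat \<Rightarrow> 'k::field mpoly set \<Rightarrow> bool" where
  "homogeneous_ideal n J \<longleftrightarrow> is_ideal n J \<and> (\<forall>f\<in>J. \<forall>t. hcomp t f \<in> J)"

definition ideal_piece :: "nat \<Rightarrow> 'k::field mpoly set \<Rightarrow> nat \<Rightarrow> 'k mpoly set" where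
  "ideal_piece n J t = J \<inter> graded_piece n t"

text \<open>Degree reverse lexicographic order, x_0 > ... > x_n, on monomials of equal degree:
  alpha > beta iff the last nonzero entry of alpha - beta is negative.\<close>
definition drl_gt :: "(nat \<Rightarrow>\<^sub>0 nat) \<Rightarrow> (nat \<Rightarrow>\<^sub>0 nat) \<Rightarrow> bool" where
  "drl_gt \<alpha> \<beta> \<longleftrightarrow> (\<exists>i. Poly_Mapping.lookup \<alpha> i < Poly_Mapping.lookup \<beta> i \<and> (\<forall>j>i. Poly_Mapping.lookup \<alpha> j = Poly_Mapping.lookup \<beta> j))"

text \<open>M is an initial segment of degree t: the first l monomials of degree t, for some l
  (equivalently, a set of degree-t monomials closed under passing to larger ones).\<close>
definition initial_segment :: "nat \<Rightarrow> nat \<Rightarrow> (nat \<Rightarrow>\<^sub>0 nat) set \<Rightarrow> bool" where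
  "initial_segment n t M \<longleftrightarrow> M \<subseteq> Mon n t \<and>
     (\<forall>\<alpha>\<in>M. \<forall>\<beta>\<in>Mon n t. drl_gt \<beta> \<alpha> \<longrightarrow> \<beta> \<in> M)"

definition hilbert_fun :: "nat \<Rightarrow> 'k::field mpoly set \<Rightarrow> nat \<Rightarrow> nat" where
  "hilbert_fun n J t = vector_space.dim (mscale :: 'k \<Rightarrow> 'k mpoly \<Rightarrow> 'k mpoly) (graded_piece n t)
                       - vector_space.dim (mscale :: 'k \<Rightarrow> 'k mpoly \<Rightarrow> 'k mpoly) (ideal_piece n J t)"

definition is_hilbert_poly :: "nat \<Rightarrow> 'k::field mpoly set \<Rightarrow> rat poly \<Rightarrow> bool" where
  "is_hilbert_poly n J P \<longleftrightarrow>
     (\<forall>\<^sub>F t in sequentially. poly P (of_nat t) = of_nat (hilbert_fun n J t))"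

end

theory Submission
  imports Defs "HOL-Library.FuncSet"
begin


context vector_space begin

lemma dim_key:
  assumes S1: "S1 \<subseteq> span F1" "finite F1"
    and S2: "S2 \<subseteq> span F2" "finite F2"
    and J: "J1 \<subseteq> S1" "J2 \<subseteq> S2"
    and hom: "module_hom scale scale \<phi>" and inj: "inj \<phi>"
    and img: "\<phi> ` J1 \<subseteq> J2"
    and cover: "S2 \<subseteq> span (\<phi> ` S1 \<union> J2)"
  shows "dim S2 + dim J1 \<le> dim S1 + dim J2"
proof -
  obtain BJ where BJ: "BJ \<subseteq> J1" "independent BJ" "J1 \<subseteq> span BJ" "card BJ = dim J1"
    using basis_exists by blast
  have fBJ: "finite BJ" using independent_span_bound[OF S1(2) BJ(2)] BJ(1) J(1) S1(1) by blast
  have indI: "independent (\<phi> ` BJ)"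
    using module_hom.independent_injective_image[OF hom BJ(2)] inj by (meson inj_on_subset subset_UNIV)
  obtain B2 where B2: "\<phi> ` BJ \<subseteq> B2" "B2 \<subseteq> J2" "independent B2" "J2 \<subseteq> span B2"
    using maximal_independent_subset_extend[of "\<phi> ` BJ" J2] indI BJ(1) img by blast
  have fB2: "finite B2" "card B2 \<le> card F2"
    using independent_span_bound[OF S2(2) B2(3)] B2(2) J(2) S2(1) by blast+
  have cB2: "card B2 = dim J2" using basis_card_eq_dim B2 by blast
  have cfBJ: "card (\<phi> ` BJ) = dim J1" using BJ(4) inj card_image by (metis inj_on_subset subset_UNIV)
  define C where "C = B2 - \<phi> ` BJ"
  have cC: "card C = dim J2 - dim J1" unfolding C_def
    using card_Diff_subset[OF finite_subset[OF B2(1) fB2(1)] B2(1)] cB2 cfBJ by simp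
  have le: "dim J1 \<le> dim J2" using card_mono[OF fB2(1) B2(1)] cB2 cfBJ by simp
  obtain D where D: "D \<subseteq> S1" "independent D" "S1 \<subseteq> span D" "card D = dim S1"
    using basis_exists by blast
  have fD: "finite D" using independent_span_bound[OF S1(2) D(2)] D(1) S1(1) by blast
  have sp1: "\<phi> ` S1 \<subseteq> span (\<phi> ` D)"
    using module_hom.spans_image[OF hom D(3)] .
  have "\<phi> ` BJ \<subseteq> span (\<phi> ` D)" using sp1 BJ(1) J(1) by blast
  hence "B2 \<subseteq> span (\<phi> ` D \<union> C)" unfolding C_def
    by (smt (verit, best) DiffI UnCI span_base span_mono subset_eq)
  hence "J2 \<subseteq> span (\<phi> ` D \<union> C)" using B2(4) by (meson span_minimal subspace_span subset_trans)
  moreover have "\<phi> ` S1 \<subseteq> span (\<phi> ` D \<union> C)" using sp1 by (meson span_mono sup_ge1 subset_trans)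
  ultimately have "S2 \<subseteq> span (\<phi> ` D \<union> C)" using cover
    by (metis le_sup_iff span_minimal subset_trans subspace_span)
  moreover have "finite (\<phi> ` D \<union> C)" using fD fB2 C_def by auto
  ultimately have "dim S2 \<le> card (\<phi> ` D \<union> C)" by (rule dim_le_card)
  also have "\<dots> \<le> card (\<phi> ` D) + card C" by (rule card_Un_le)
  also have "\<dots> \<le> dim S1 + card C" using card_image_le[OF fD] D(4) by simp
  finally show ?thesis using cC le by simp
qed

lemma dim_le_sub:
  assumes "A \<subseteq> B" "B \<subseteq> span F" "finite F"
  shows "dim A \<le> dim B"
proof -
  obtain BA where BA: "BA \<subseteq> A" "independent BA" "A \<subseteq> span BA" "card BA = dim A"
    using basis_exists by blast
  obtain B2 where B2: "BA \<subseteq> B2" "B2 \<subseteq> B" "independent B2" "B \<subseteq> span B2"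
    using maximal_independent_subset_extend[of BA B] BA assms(1) by blast
  have "finite B2" using independent_span_bound[OF assms(3) B2(3)] B2(2) assms(2) by blast
  moreover have "card B2 = dim B" using basis_card_eq_dim B2 by blast
  ultimately show ?thesis using card_mono[OF _ B2(1)] BA(4) by simp
qed

end

lemma vs_mscale: "vector_space (mscale :: 'k::field \<Rightarrow> 'k mpoly \<Rightarrow> 'k mpoly)"
  by unfold_locales (auto simp: mscale_def distrib_left distrib_right single_add mult.assoc mult_single)

lemma mscale_single: "mscale c (Poly_Mapping.single \<alpha> d) = Poly_Mapping.single \<alpha> (c * d)"
  by (simp add: mscale_def mult_single)

lemma mdeg_sum: "finite A \<Longrightarrow> Poly_Mapping.keys \<alpha> \<subseteq> A \<Longrightarrow> mdeg \<alpha> = (\<Sum>i\<in>A. Poly_Mapping.lookup \<alpha> i)"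
  unfolding mdeg_def by (rule sum.mono_neutral_left) (auto simp: in_keys_iff)

lemma mdeg_add: "mdeg (a + b) = mdeg a + mdeg b"
proof -
  let ?A = "Poly_Mapping.keys a \<union> Poly_Mapping.keys b"
  have "mdeg (a+b) = (\<Sum>i\<in>?A. Poly_Mapping.lookup (a+b) i)"
    using keys_add[of a b] by (intro mdeg_sum) auto
  also have "\<dots> = (\<Sum>i\<in>?A. Poly_Mapping.lookup a i) + (\<Sum>i\<in>?A. Poly_Mapping.lookup b i)"
    by (simp add: lookup_add sum.distrib)
  also have "\<dots> = mdeg a + mdeg b" by (subst (1 2) mdeg_sum[of ?A]) auto
  finally show ?thesis .
qed

lemma mdeg_single: "mdeg (Poly_Mapping.single i k) = k"
  by (subst mdeg_sum[of "{i}"]) auto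

lemma mdeg_zero: "mdeg 0 = 0" by (simp add: mdeg_def)

lemma lookup_le_mdeg: "Poly_Mapping.lookup \<alpha> i \<le> mdeg \<alpha>"
proof (cases "i \<in> Poly_Mapping.keys \<alpha>")
  case True thus ?thesis unfolding mdeg_def by (intro member_le_sum) auto
qed (simp add: in_keys_iff)

lemma keys_add_nat: "Poly_Mapping.keys (a + b :: 'a \<Rightarrow>\<^sub>0 nat) = Poly_Mapping.keys a \<union> Poly_Mapping.keys b"
  by (auto simp: in_keys_iff lookup_add)

lemma split_unit: assumes "Poly_Mapping.lookup (g :: 'a \<Rightarrow>\<^sub>0 nat) i \<ge> 1"
  shows "g = Poly_Mapping.single i 1 + (g - Poly_Mapping.single i 1)"
  by (rule poly_mapping_eqI) (use assms in \<open>auto simp: lookup_add lookup_minus lookup_single when_def\<close>)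

lemma decomp: "mdeg \<alpha> \<ge> m \<Longrightarrow> \<exists>\<beta> \<gamma>. \<alpha> = \<beta> + \<gamma> \<and> mdeg \<beta> = m"
proof (induction m)
  case 0 thus ?case by (intro exI[of _ 0] exI[of _ \<alpha>]) (auto simp: mdeg_zero)
next
  case (Suc m)
  then obtain \<beta> \<gamma> where bg: "\<alpha> = \<beta> + \<gamma>" "mdeg \<beta> = m" by auto
  hence "mdeg \<gamma> \<ge> 1" using Suc.prems mdeg_add[of \<beta> \<gamma>] by simp
  then obtain i where i: "i \<in> Poly_Mapping.keys \<gamma>" 
  proof -
    have "\<gamma> \<noteq> 0" using \<open>mdeg \<gamma> \<ge> 1\<close> by (auto simp: mdeg_zero)
    thus ?thesis using that by (metis all_not_in_conv keys_eq_empty)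
  qed
  hence "Poly_Mapping.lookup \<gamma> i \<ge> 1" by (simp add: in_keys_iff)
  from split_unit[OF this] have "\<gamma> = Poly_Mapping.single i 1 + (\<gamma> - Poly_Mapping.single i 1)" .
  hence "\<alpha> = (\<beta> + Poly_Mapping.single i 1) + (\<gamma> - Poly_Mapping.single i 1)"
    using bg(1) by (metis add.assoc)
  moreover have "mdeg (\<beta> + Poly_Mapping.single i 1) = Suc m" using bg(2) by (simp add: mdeg_add mdeg_single)
  ultimately show ?case by blast
qed

lemma finite_Mon: "finite (Mon n t)"
proof -
  let ?f = "\<lambda>\<alpha>::nat\<Rightarrow>\<^sub>0nat. restrict (Poly_Mapping.lookup \<alpha>) {..n}"
  have "inj_on ?f (Mon n t)"
  proof (rule inj_onI)
    fix a b assume ab: "a \<in> Mon n t" "b \<in> Mon n t" "?f a = ?f b"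
    show "a = b"
    proof (rule poly_mapping_eqI)
      fix i show "Poly_Mapping.lookup a i = Poly_Mapping.lookup b i"
      proof (cases "i \<le> n")
        case True thus ?thesis using ab(3) by (auto simp: restrict_def fun_eq_iff) (metis (full_types))
      next
        case False
        hence "i \<notin> Poly_Mapping.keys a" "i \<notin> Poly_Mapping.keys b" using ab(1,2) unfolding Mon_def by auto
        thus ?thesis by (simp add: in_keys_iff)
      qed
    qed
  qed
  moreover have "?f ` Mon n t \<subseteq> PiE {..n} (\<lambda>_. {..t})"
    using lookup_le_mdeg unfolding Mon_def by (auto simp: PiE_def)
  moreover have "finite (PiE {..n} (\<lambda>_. {..t::nat}))" by (intro finite_PiE) auto
  ultimately show ?thesis by (metis finite_imageD finite_subset)
qed

lemma sum_monomials: "(f :: 'k::field mpoly) = (\<Sum>\<alpha>\<in>Poly_Mapping.keys f. mscale (Poly_Mapping.lookup f \<alpha>) (monom_poly \<alpha>))"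
  by (rule poly_mapping_eqI) (auto simp: lookup_sum monom_poly_def mscale_single lookup_single when_def in_keys_iff)

lemma graded_span: "graded_piece n t \<subseteq> module.span (mscale :: 'k::field \<Rightarrow> _) (monom_poly ` Mon n t)"
proof
  interpret V: vector_space "mscale :: 'k \<Rightarrow> 'k mpoly \<Rightarrow> 'k mpoly" by (rule vs_mscale)
  fix f :: "'k mpoly" assume f: "f \<in> graded_piece n t"
  have "(\<Sum>\<alpha>\<in>Poly_Mapping.keys f. mscale (Poly_Mapping.lookup f \<alpha>) (monom_poly \<alpha>)) \<in> V.span (monom_poly ` Mon n t)"
  proof (intro V.span_sum V.span_scale V.span_base)
    fix \<alpha> assume "\<alpha> \<in> Poly_Mapping.keys f"
    thus "monom_poly \<alpha> \<in> monom_poly ` Mon n t" using f unfolding graded_piece_def polyring_def Mon_def by auto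
  qed
  thus "f \<in> V.span (monom_poly ` Mon n t)" using sum_monomials[of f] by simp
qed


lemma keys_monom_mult: "Poly_Mapping.keys (monom_poly \<gamma> * (f :: 'k::field mpoly)) \<subseteq> (+) \<gamma> ` Poly_Mapping.keys f"
  using keys_mult[of "monom_poly \<gamma>" f] by (auto simp: monom_poly_def)

lemma monom_polyring: "Poly_Mapping.keys \<gamma> \<subseteq> {..n} \<Longrightarrow> (monom_poly \<gamma> :: 'k::field mpoly) \<in> polyring n"
  by (auto simp: polyring_def monom_poly_def)

lemma monom_mult_graded:
  assumes "f \<in> graded_piece n t" "Poly_Mapping.keys \<gamma> \<subseteq> {..n}"
  shows "monom_poly \<gamma> * (f :: 'k::field mpoly) \<in> graded_piece n (mdeg \<gamma> + t)"
proof -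
  have "\<And>\<alpha>. \<alpha> \<in> Poly_Mapping.keys (monom_poly \<gamma> * f) \<Longrightarrow> Poly_Mapping.keys \<alpha> \<subseteq> {..n} \<and> mdeg \<alpha> = mdeg \<gamma> + t"
  proof -
    fix \<alpha> assume "\<alpha> \<in> Poly_Mapping.keys (monom_poly \<gamma> * f)"
    then obtain \<beta> where "\<beta> \<in> Poly_Mapping.keys f" "\<alpha> = \<gamma> + \<beta>" using keys_monom_mult by blast
    thus "Poly_Mapping.keys \<alpha> \<subseteq> {..n} \<and> mdeg \<alpha> = mdeg \<gamma> + t"
      using assms unfolding graded_piece_def polyring_def by (auto simp: keys_add_nat mdeg_add)
  qed
  thus ?thesis unfolding graded_piece_def polyring_def by auto
qed

lemma monom_mult: "monom_poly (a + b) = (monom_poly a * monom_poly b :: 'k::field mpoly)"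
  by (simp add: monom_poly_def mult_single)

lemma monom_nz: "(monom_poly a :: 'k::field mpoly) \<noteq> 0"
  by (metis monom_poly_def lookup_single_eq one_neq_zero lookup_zero)


lemma eventually_const_nat:
  assumes "\<And>t. t \<ge> m \<Longrightarrow> h (Suc t) \<le> (h t :: nat)"
  shows "\<exists>N c. \<forall>t\<ge>N. h t = c"
proof -
  define c where "c = (LEAST v. \<exists>t\<ge>m. h t = v)"
  have "\<exists>t\<ge>m. h t = c" unfolding c_def by (rule LeastI[of _ "h m"]) auto
  then obtain N where N: "N \<ge> m" "h N = c" by auto
  have mono: "h t \<le> h N" if "t \<ge> N" for t
    using that
  proof (induction t rule: dec_induct)
    case (step k) thus ?case using assms[of k] N(1) by simp
  qed simp
  have "h t \<ge> c" if "t \<ge> m" for t unfolding c_def using that by (intro Least_le) auto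
  hence "\<forall>t\<ge>N. h t = c" using mono N by (metis order.trans le_antisym)
  thus ?thesis by blast
qed

theorem mainTheorem13:
  fixes J :: "'k::field_char_0 mpoly set" and n m m' :: nat
  assumes alg_closed: "\<And>p :: 'k poly. degree p \<ge> 1 \<Longrightarrow> \<exists>x. poly p x = 0"
    and "n \<ge> 1"
    and "homogeneous_ideal n J"
    and "m > 0"
    and "ideal_piece n J m \<noteq> {0}"
    and "\<exists>M. initial_segment n m M \<and>
           ideal_piece n J m = module.span (mscale :: 'k \<Rightarrow> 'k mpoly \<Rightarrow> 'k mpoly) (monom_poly ` M)"
    and "m' < m" and "ideal_piece n J m' \<noteq> {0}"
  shows "\<exists>P. is_hilbert_poly n J P \<and> degree P = 0"
proof -
  interpret V: vector_space "mscale :: 'k \<Rightarrow> 'k mpoly \<Rightarrow> 'k mpoly" by (rule vs_mscale)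
  have idl: "is_ideal n J" using assms(3) unfolding homogeneous_ideal_def by blast
  have Jmul: "g * f \<in> J" if "f \<in> J" "g \<in> polyring n" for f g using idl that unfolding is_ideal_def by blast
  obtain M where M: "initial_segment n m M" "ideal_piece n J m = V.span (monom_poly ` M)"
    using assms(6) by blast
  have "0 \<in> ideal_piece n J m'" using idl unfolding is_ideal_def ideal_piece_def graded_piece_def polyring_def by auto
  then obtain f where f: "f \<in> ideal_piece n J m'" "f \<noteq> 0" using assms(8) by blast
  define e where "e = m - m'"
  have e: "e \<ge> 1" "mdeg (Poly_Mapping.single n e) + m' = m" using assms(7) by (auto simp: e_def mdeg_single)
  define g where "g = monom_poly (Poly_Mapping.single n e) * f"
  have kn: "Poly_Mapping.keys (Poly_Mapping.single n e) \<subseteq> {..n}" by auto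
  have "g \<in> J" unfolding g_def using f(1) Jmul monom_polyring[OF kn] unfolding ideal_piece_def by blast
  moreover have "g \<in> graded_piece n m" unfolding g_def using monom_mult_graded[OF _ kn, of f m'] f(1) e
    unfolding ideal_piece_def by auto
  ultimately have gJm: "g \<in> V.span (monom_poly ` M)" using M(2) unfolding ideal_piece_def by auto
  have gnz: "g \<noteq> 0" unfolding g_def using f(2) monom_nz by simp
  have gkeys: "Poly_Mapping.lookup \<kappa> n \<ge> 1" if kk: "\<kappa> \<in> Poly_Mapping.keys g" for \<kappa>
  proof -
    obtain \<beta> where "\<kappa> = Poly_Mapping.single n e + \<beta>" using keys_monom_mult kk unfolding g_def by blast
    thus ?thesis using e(1) by (simp add: lookup_add)
  qed
  have "\<exists>\<alpha>0\<in>M. Poly_Mapping.lookup \<alpha>0 n \<ge> 1"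
  proof (rule ccontr)
    assume "\<not> ?thesis"
    hence M0: "\<forall>\<alpha>\<in>M. Poly_Mapping.lookup \<alpha> n = 0" by auto
    let ?P = "\<lambda>h :: 'k mpoly. \<forall>\<kappa>\<in>Poly_Mapping.keys h. Poly_Mapping.lookup \<kappa> n = 0"
    have "?P g"
    proof (rule V.span_induct[OF gJm])
      show "V.subspace (Collect ?P)" unfolding V.subspace_def
      proof (intro conjI ballI allI)
        fix x y assume "x \<in> Collect ?P" "y \<in> Collect ?P"
        thus "x + y \<in> Collect ?P" using keys_add[of x y] by blast
      next
        fix c x assume "x \<in> Collect ?P"
        have "\<kappa> \<in> Poly_Mapping.keys x" if "\<kappa> \<in> Poly_Mapping.keys (mscale c x)" for \<kappa>
          using that keys_mult[of "Poly_Mapping.single 0 c" x] unfolding mscale_def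
          by (auto split: if_splits)
        thus "mscale c x \<in> Collect ?P" using \<open>x \<in> Collect ?P\<close> by blast
      qed simp
    next
      fix x :: "'k mpoly" assume "x \<in> monom_poly ` M"
      thus "?P x" using M0 by (auto simp: monom_poly_def)
    qed
    moreover obtain \<kappa> where "\<kappa> \<in> Poly_Mapping.keys g" using gnz by (metis all_not_in_conv keys_eq_empty)
    ultimately show False using gkeys by fastforce
  qed
  then obtain \<alpha>0 where a0: "\<alpha>0 \<in> M" "Poly_Mapping.lookup \<alpha>0 n \<ge> 1" by blast
  have allM: "\<beta> \<in> M" if "\<beta> \<in> Mon n m" "Poly_Mapping.lookup \<beta> n = 0" for \<beta>
  proof -
    have a0M: "\<alpha>0 \<in> Mon n m" using a0(1) M(1) unfolding initial_segment_def by blast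
    have "drl_gt \<beta> \<alpha>0" unfolding drl_gt_def
    proof (intro exI[of _ n] conjI allI impI)
      show "Poly_Mapping.lookup \<beta> n < Poly_Mapping.lookup \<alpha>0 n" using that a0 by simp
      fix j assume "j > n"
      hence "j \<notin> Poly_Mapping.keys \<beta>" "j \<notin> Poly_Mapping.keys \<alpha>0" using that(1) a0M unfolding Mon_def by auto
      thus "Poly_Mapping.lookup \<beta> j = Poly_Mapping.lookup \<alpha>0 j" by (simp add: in_keys_iff)
    qed
    thus ?thesis using M(1) a0(1) that(1) unfolding initial_segment_def by blast
  qed
  have monJ: "monom_poly \<alpha> \<in> J" if am: "\<alpha> \<in> Mon n t" "t \<ge> m" "Poly_Mapping.lookup \<alpha> n = 0" for \<alpha> t
  proof -
    obtain \<beta> \<gamma> where bg: "\<alpha> = \<beta> + \<gamma>" "mdeg \<beta> = m" using decomp[of m \<alpha>] am unfolding Mon_def by auto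
    have kb: "Poly_Mapping.keys \<beta> \<subseteq> {..n}" "Poly_Mapping.keys \<gamma> \<subseteq> {..n}"
      using am(1) bg(1) unfolding Mon_def by (auto simp: keys_add_nat)
    have "Poly_Mapping.lookup \<beta> n = 0" using am(3) bg(1) by (simp add: lookup_add)
    hence "\<beta> \<in> M" using allM kb bg(2) unfolding Mon_def by auto
    hence "monom_poly \<beta> \<in> ideal_piece n J m" using M(2) by (auto intro: V.span_base)
    hence "monom_poly \<gamma> * monom_poly \<beta> \<in> J" using Jmul monom_polyring[OF kb(2)] unfolding ideal_piece_def by blast
    thus ?thesis using bg(1) by (simp add: monom_mult mult.commute)
  qed
  define \<phi> where "\<phi> = (\<lambda>h :: 'k mpoly. monom_poly (Poly_Mapping.single n 1) * h)"
  have kn1: "Poly_Mapping.keys (Poly_Mapping.single n (1::nat)) \<subseteq> {..n}" by auto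
  have hom: "module_hom mscale mscale \<phi>"
    unfolding module_hom_iff using V.module_axioms
    by (auto simp: \<phi>_def distrib_left mscale_def mult.left_commute)
  have inj: "inj \<phi>" unfolding \<phi>_def using monom_nz by (auto intro: injI)
  define h where "h t = hilbert_fun n J t" for t
  have step: "h (Suc t) \<le> h t" if t: "t \<ge> m" for t
  proof -
    let ?S1 = "graded_piece n t :: 'k mpoly set" and ?S2 = "graded_piece n (Suc t) :: 'k mpoly set"
    let ?J1 = "ideal_piece n J t" and ?J2 = "ideal_piece n J (Suc t)"
    have img: "\<phi> ` ?J1 \<subseteq> ?J2"
    proof
      fix x assume "x \<in> \<phi> ` ?J1"
      then obtain y where y: "y \<in> ?J1" "x = \<phi> y" by auto
      have "x \<in> J" using y Jmul monom_polyring[OF kn1] unfolding \<phi>_def ideal_piece_def by blast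
      moreover have "x \<in> ?S2" using y monom_mult_graded[OF _ kn1, of y t]
        unfolding \<phi>_def ideal_piece_def by (auto simp: mdeg_single)
      ultimately show "x \<in> ?J2" unfolding ideal_piece_def by auto
    qed
    have mons: "monom_poly ` Mon n (Suc t) \<subseteq> V.span (\<phi> ` ?S1 \<union> ?J2)"
    proof
      fix x :: "'k mpoly" assume "x \<in> monom_poly ` Mon n (Suc t)"
      then obtain \<alpha> where a: "\<alpha> \<in> Mon n (Suc t)" "x = monom_poly \<alpha>" by auto
      show "x \<in> V.span (\<phi> ` ?S1 \<union> ?J2)"
      proof (cases "Poly_Mapping.lookup \<alpha> n \<ge> 1")
        case True
        define \<beta> where "\<beta> = \<alpha> - Poly_Mapping.single n 1"
        have ab: "\<alpha> = Poly_Mapping.single n 1 + \<beta>" using split_unit[OF True] unfolding \<beta>_def .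
        have "\<beta> \<in> Mon n t" using a(1) ab unfolding Mon_def
          by (auto simp: keys_add_nat mdeg_add mdeg_single)
        hence "monom_poly \<beta> \<in> ?S1" unfolding graded_piece_def polyring_def Mon_def
          by (auto simp: monom_poly_def)
        moreover have "x = \<phi> (monom_poly \<beta>)" using a(2) ab by (simp add: \<phi>_def monom_mult)
        ultimately show ?thesis by (auto intro: V.span_base)
      next
        case False
        hence "monom_poly \<alpha> \<in> J" using monJ[OF a(1)] t by simp
        moreover have "monom_poly \<alpha> \<in> ?S2" using a(1) unfolding graded_piece_def polyring_def Mon_def
          by (auto simp: monom_poly_def)
        ultimately show ?thesis using a(2) unfolding ideal_piece_def by (auto intro: V.span_base)
      qed
    qed
    have cover: "?S2 \<subseteq> V.span (\<phi> ` ?S1 \<union> ?J2)"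
      using graded_span[of n "Suc t"] V.span_minimal[OF mons V.subspace_span] by blast
    have key: "V.dim ?S2 + V.dim ?J1 \<le> V.dim ?S1 + V.dim ?J2"
      by (rule V.dim_key[OF graded_span finite_imageI[OF finite_Mon] graded_span finite_imageI[OF finite_Mon]
            _ _ hom inj img cover]) (auto simp: ideal_piece_def)
    have "V.dim ?J1 \<le> V.dim ?S1"
      by (rule V.dim_le_sub[OF _ graded_span finite_imageI[OF finite_Mon]]) (auto simp: ideal_piece_def)
    thus ?thesis using key unfolding h_def hilbert_fun_def by linarith
  qed
  obtain N c where Nc: "\<forall>t\<ge>N. h t = c" using eventually_const_nat[of m h] step by blast
  show ?thesis
  proof (intro exI[of _ "[:of_nat c:]"] conjI)
    show "is_hilbert_poly n J [:of_nat c:]" unfolding is_hilbert_poly_def eventually_sequentially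
      using Nc unfolding h_def by auto
  qed simp
qed

end
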